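(* For every $z\in\mathbb R$ there is a constant $C_z$ depending only on $z$ such that for all integers $q\ge1$ $$\left|\sum_{u=0}^{q}\sum_{k=0}^{u}\frac{\alpha_{k,u-k}}{k!(u-k)!}\frac{\beta_{q-u}(z)}{(q-u)!}\right|\le C_z\,2^{q}\frac{1}{\sqrt{(q-1)!}}.$$
   Context: $H_n$ are the probabilists' Hermite polynomials, $\phi$ the standard Gaussian density, $\beta_\ell(z):=\phi(z)H_\ell(z)$. For nonnegative integers $n,m$, $\alpha_{2n,2m}=\sqrt{\frac\pi2}\frac{(2n)!(2m)!}{n!m!}\frac{1}{2^{n+m}}\sum_{i=0}^{n+m}(-1)^{i+n+m}\binom{n+m}{i}\frac{(2i+1)!}{(i!)^2}\frac1{4^i}$, and $\alpha_{k,l}=0$ unless $k$ and $l$ are both even. *)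

theory Defs
  imports "HOL-Analysis.Analysis"
begin

fun hermite_prob :: "nat \<Rightarrow> real \<Rightarrow> real" where
  "hermite_prob 0 x = 1"
| "hermite_prob (Suc 0) x = x"
| "hermite_prob (Suc (Suc n)) x = x * hermite_prob (Suc n) x - real (Suc n) * hermite_prob n x"

definition std_gauss_density :: "real \<Rightarrow> real" where
  "std_gauss_density z = exp (- (z^2) / 2) / sqrt (2 * pi)"

definition beta_fn :: "nat \<Rightarrow> real \<Rightarrow> real" where
  "beta_fn l z = std_gauss_density z * hermite_prob l z"

definition alpha_even :: "nat \<Rightarrow> nat \<Rightarrow> real" where
  "alpha_even n m = sqrt (pi / 2) * (fact (2*n) * fact (2*m) / (fact n * fact m))
     * (1 / 2 ^ (n + m))
     * (\<Sum>i=0..n+m. (-1) ^ (i + n + m) * real ((n + m) choose i)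
          * (fact (2*i+1) / (fact i)^2) * (1 / 4 ^ i))"

definition alpha_coef :: "nat \<Rightarrow> nat \<Rightarrow> real" where
  "alpha_coef k l = (if even k \<and> even l then alpha_even (k div 2) (l div 2) else 0)"

end

theory Submission imports Defs begin


definition hdiff :: "(nat \<Rightarrow> real) \<Rightarrow> nat \<Rightarrow> nat \<Rightarrow> real" where
  "hdiff F N m = (\<Sum>i=0..N. (-1)^(i+N) * real (N choose i) * F (m+i))"

lemma hdiff_ext: "hdiff F N m = (\<Sum>i=0..Suc N. (-1)^(i+N) * real (N choose i) * F (m+i))"
  unfolding hdiff_def by simp

lemma hdiff_Suc: "hdiff F (Suc N) m = hdiff F N (Suc m) - hdiff F N m"
proof -
  have "hdiff F (Suc N) m = (-1)^(Suc N) * F m + (\<Sum>i=0..N. (-1)^(Suc i+Suc N) * real (Suc N choose Suc i) * F (m+Suc i))"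
    unfolding hdiff_def by (subst sum.atLeast0_atMost_Suc_shift) simp
  also have "\<dots> = (-1)^(Suc N) * F m + (\<Sum>i=0..N. (-1)^(i+N) * real (N choose i) * F (Suc m+i))
       + (\<Sum>i=0..N. (-1)^(i+N) * real (N choose Suc i) * F (m+Suc i))"
    by (simp add: sum.distrib algebra_simps)
  also have "(\<Sum>i=0..N. (-1)^(i+N) * real (N choose i) * F (Suc m+i)) = hdiff F N (Suc m)"
    unfolding hdiff_def by simp
  also have "- hdiff F N m = (-1)^(Suc N) * F m + (\<Sum>i=0..N. (-1)^(i+N) * real (N choose Suc i) * F (m+Suc i))"
    unfolding hdiff_ext by (subst sum.atLeast0_atMost_Suc_shift) (simp add: sum_negf[symmetric])
  ultimately show ?thesis by linarith
qed

definition Fh :: "nat \<Rightarrow> real" where "Fh j = (of_nat j + 1/2) gchoose j"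

lemma hdiff_Fh: "hdiff Fh N m = (of_nat m + 1/2) gchoose (m+N)"
proof (induction N arbitrary: m)
  case 0
  then show ?case by (simp add: hdiff_def Fh_def)
next
  case (Suc N)
  have "hdiff Fh (Suc N) m = ((of_nat m + 1/2 + 1) gchoose (Suc (m+N))) - ((of_nat m + 1/2) gchoose (m+N))"
    using Suc by (simp add: hdiff_Suc add_ac)
  also have "\<dots> = (of_nat m + 1/2) gchoose (Suc (m+N))"
    by (subst gbinomial_Suc_Suc) simp
  finally show ?case by simp
qed

lemma half_gchoose_le: "\<bar>(1/2::real) gchoose N\<bar> \<le> 1"
proof (induction N)
  case 0 then show ?case by simp
next
  case (Suc N)
  have "(1/2::real) gchoose (Suc N) = ((1/2) gchoose N) * ((1/2 - of_nat N) / of_nat (Suc N))"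
    using gbinomial_mult_1[of "1/2::real" N] by (simp add: field_simps)
  moreover have "\<bar>(1/2 - of_nat N) / of_nat (Suc N)\<bar> \<le> (1::real)"
    by (simp add: abs_if field_simps)
  moreover have "\<bar>(1/2::real) gchoose N\<bar> * \<bar>(1/2 - of_nat N) / of_nat (Suc N)\<bar> \<le> 1 * 1"
    by (rule mult_mono) (use Suc calculation in auto)
  ultimately show ?case
    by (simp only: abs_mult)
qed

lemma Fh_eq: "fact (2*j+1) / ((fact j)^2 * 4^j) = Fh j"
proof -
  have "Fh j = pochhammer (3/2) j / fact j"
    unfolding Fh_def by (subst gbinomial_pochhammer') simp
  moreover have "fact (2*j+1) / ((fact j)^2 * 4^j) = pochhammer (3/2::real) j / fact j"
  proof (induction j)
    case 0 then show ?case by simp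
  next
    case (Suc j)
    have e: "fact (2*Suc j+1) = (fact (2*j+1) :: real) * (2*j+2) * (2*j+3)"
      by (simp add: algebra_simps)
    have "fact (2*Suc j+1) / ((fact (Suc j))^2 * 4^(Suc j)) =
        (fact (2*j+1) / ((fact j)^2 * 4^j)) * ((2*j+3) / (2*(j+1)) :: real)"
    proof -
      have X: "(fact j)^2 * 4^j \<noteq> (0::real)" by simp
      have hX: "(fact (Suc j) :: real)^2 * 4^(Suc j) = ((fact j)^2 * 4^j) * (4*(j+1)^2)"
        by (simp add: power2_eq_square algebra_simps)
      have "(fact (2*Suc j+1) :: real) / ((fact (Suc j))^2 * 4^(Suc j)) =
          ((fact (2*j+1) :: real) * (2*j+2) * (2*j+3)) / (((fact j)^2 * 4^j) * (4*(j+1)^2))"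
        by (simp only: e hX)
      also have "\<dots> = (fact (2*j+1) / ((fact j)^2 * 4^j)) * ((2*j+2)*(2*j+3) / (4*(j+1)^2))"
        by (simp add: field_simps)
      also have "(2*j+2)*(2*j+3) / (4*(j+1)^2) = ((2*j+3) / (2*(j+1)) :: real)"
      proof -
        have "(2*j+2)*(2*j+3) / (4*(j+1)^2) = ((2*(j+1))*(2*j+3)) / ((2*(j+1))*(2*(j+1)) :: real)"
          by (simp add: power2_eq_square algebra_simps)
        also have "\<dots> = (2*j+3) / (2*(j+1))"
          unfolding of_nat_mult by (rule mult_divide_mult_cancel_left) simp
        finally show ?thesis .
      qed
      finally show ?thesis .
    qed
    also have "\<dots> = pochhammer (3/2::real) (Suc j) / fact (Suc j)"
      unfolding Suc pochhammer_Suc by (simp add: field_simps)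
    finally show ?case .
  qed
  ultimately show ?thesis by simp
qed

lemma D_bound: "\<bar>\<Sum>i=0..N. (-1) ^ (i + N) * real (N choose i)
          * (fact (2*i+1) / (fact i)^2) * (1 / 4 ^ i)\<bar> \<le> (1::real)"
proof -
  have "(\<Sum>i=0..N. (-1) ^ (i + N) * real (N choose i)
          * (fact (2*i+1) / (fact i)^2) * (1 / 4 ^ i)) = hdiff Fh N 0"
    unfolding hdiff_def by (rule sum.cong) (auto simp: Fh_eq[symmetric])
  also have "\<dots> = (1/2) gchoose N" by (simp add: hdiff_Fh)
  finally show ?thesis using half_gchoose_le by simp
qed



lemma sum_even_only:
  fixes g :: "nat \<Rightarrow> real"
  assumes "\<And>k. odd k \<Longrightarrow> g k = 0"
  shows "(\<Sum>k=0..2*N. g k) = (\<Sum>n=0..N. g (2*n))"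
proof (induction N)
  case 0 then show ?case by simp
next
  case (Suc N)
  have "{0..2*Suc N} = insert (Suc (Suc (2*N))) (insert (Suc (2*N)) {0..2*N})" by auto
  then have "(\<Sum>k=0..2*Suc N. g k) = g (Suc (Suc (2*N))) + g (Suc (2*N)) + (\<Sum>k=0..2*N. g k)"
    by simp
  also have "g (Suc (2*N)) = 0" using assms by simp
  finally show ?case using Suc by simp
qed

lemma inv_fact_sum: "(\<Sum>n=0..N. 1 / (fact n * fact (N - n))) = (2::real)^N / fact N"
proof -
  have "(\<Sum>n=0..N. 1 / (fact n * fact (N - n))) = (\<Sum>n=0..N. real (N choose n) / fact N)"
    by (rule sum.cong) (auto simp: binomial_fact)
  also have "\<dots> = real (\<Sum>n\<le>N. N choose n) / fact N"
    by (simp add: sum_divide_distrib atLeast0AtMost)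
  also have "\<dots> = 2^N / fact N" by (simp add: choose_row_sum)
  finally show ?thesis .
qed

lemma alpha_even_bound:
  "\<bar>alpha_even n m\<bar> / (fact (2*n) * fact (2*m)) \<le> sqrt (pi/2) / (fact n * fact m * 2^(n+m))"
proof -
  let ?D = "(\<Sum>i=0..n+m. (-1) ^ (i + n + m) * real ((n + m) choose i)
          * (fact (2*i+1) / (fact i)^2) * (1 / 4 ^ i))"
  have D: "\<bar>?D\<bar> \<le> 1" using D_bound[of "n+m"] by (simp add: add_ac)
  have "\<bar>alpha_even n m\<bar> / (fact (2*n) * fact (2*m)) =
        sqrt (pi/2) / (fact n * fact m * 2^(n+m)) * \<bar>?D\<bar>"
    unfolding alpha_even_def by (simp add: abs_mult field_simps)
  also have "\<dots> \<le> sqrt (pi/2) / (fact n * fact m * 2^(n+m)) * 1"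
    by (rule mult_left_mono[OF D]) simp
  finally show ?thesis by simp
qed

definition Ew :: "nat \<Rightarrow> real" where
  "Ew u = (if even u then 1 / fact (u div 2) else 0)"

lemma A_bound:
  "\<bar>\<Sum>k=0..u. alpha_coef k (u - k) / (fact k * fact (u - k))\<bar> \<le> sqrt (pi/2) * Ew u"
proof (cases "even u")
  case False
  have "(\<Sum>k=0..u. alpha_coef k (u - k) / (fact k * fact (u - k))) = 0"
  proof (rule sum.neutral, intro ballI)
    fix k assume "k \<in> {0..u}"
    then have nk: "\<not> (even k \<and> even (u - k))" using False by auto
    have "alpha_coef k (u - k) = 0" unfolding alpha_coef_def by (rule if_not_P[OF nk])
    then show "alpha_coef k (u - k) / (fact k * fact (u - k)) = 0" by simp
  qed
  then show ?thesis by (simp add: Ew_def)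
next
  case True
  then obtain N where u: "u = 2*N" by auto
  define g where "g k = (if even k then sqrt (pi/2) / (fact (k div 2) * fact (N - k div 2) * 2^N) else (0::real))" for k
  have "\<bar>\<Sum>k=0..u. alpha_coef k (u - k) / (fact k * fact (u - k))\<bar>
        \<le> (\<Sum>k=0..u. \<bar>alpha_coef k (u - k) / (fact k * fact (u - k))\<bar>)"
    by (rule sum_abs)
  also have "\<dots> \<le> (\<Sum>k=0..u. g k)"
  proof (rule sum_mono)
    fix k assume k: "k \<in> {0..u}"
    show "\<bar>alpha_coef k (u - k) / (fact k * fact (u - k))\<bar> \<le> g k"
    proof (cases "even k")
      case False then show ?thesis by (simp add: alpha_coef_def g_def)
    next
      case True
      then obtain n where kn: "k = 2*n" by auto
      with k u have nN: "n \<le> N" by auto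
      have "u - k = 2*(N-n)" using kn u by simp
      then have "\<bar>alpha_coef k (u - k) / (fact k * fact (u - k))\<bar>
          = \<bar>alpha_even n (N-n)\<bar> / (fact (2*n) * fact (2*(N-n)))"
        using kn by (simp add: alpha_coef_def abs_mult)
      also have "\<dots> \<le> sqrt (pi/2) / (fact n * fact (N-n) * 2^(n+(N-n)))"
        by (rule alpha_even_bound)
      also have "\<dots> = g k" using kn nN by (simp add: g_def)
      finally show ?thesis .
    qed
  qed
  also have "(\<Sum>k=0..u. g k) = (\<Sum>n=0..N. g (2*n))"
    unfolding u by (rule sum_even_only) (simp add: g_def)
  also have "\<dots> = sqrt (pi/2) / 2^N * (\<Sum>n=0..N. 1 / (fact n * fact (N - n)))"
    by (simp add: g_def sum_distrib_left mult_ac)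
  also have "\<dots> = sqrt (pi/2) * Ew u"
    by (simp add: inv_fact_sum Ew_def u)
  finally show ?thesis .
qed



definition wh :: "nat \<Rightarrow> real" where "wh n = sqrt ((3/2)^n * fact n)"

lemma wh_pos: "wh n > 0" unfolding wh_def by simp

lemma wh_step:
  assumes "6 * z^2 \<le> real m + 1"
  shows "\<bar>z\<bar> * wh (Suc m) + (real m + 1) * wh m \<le> wh (Suc (Suc m))"
proof -
  have w1: "wh (Suc m) = sqrt (3/2 * (real m + 1)) * wh m"
    unfolding wh_def by (simp add: real_sqrt_mult[symmetric] algebra_simps)
  have w2: "wh (Suc (Suc m)) = sqrt ((3/2)^2 * ((real m + 1) * (real m + 2))) * wh m"
    unfolding wh_def by (simp add: real_sqrt_mult[symmetric] algebra_simps power2_eq_square)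
  have "(3/2) * (real m + 1) = sqrt ((3/2)^2 * (real m + 1)^2)"
    by (simp add: real_sqrt_mult)
  also have "\<dots> \<le> sqrt ((3/2)^2 * ((real m + 1) * (real m + 2)))"
    by (rule real_sqrt_le_mono) (simp add: power2_eq_square)
  finally have a: "(3/2) * (real m + 1) \<le> sqrt ((3/2)^2 * ((real m + 1) * (real m + 2)))" .
  have "\<bar>z\<bar> * sqrt (3/2 * (real m + 1)) = sqrt (z^2 * (3/2 * (real m + 1)))"
    by (simp only: real_sqrt_mult real_sqrt_abs)
  also have "\<dots> \<le> sqrt (((real m + 1)/2)^2)"
  proof (rule real_sqrt_le_mono)
    have "z^2 * (3/2 * (real m + 1)) \<le> ((real m + 1)/6) * (3/2 * (real m + 1))"
      by (rule mult_right_mono) (use assms in auto)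
    moreover have "((real m + 1)/6) * (3/2 * (real m + 1)) = ((real m + 1)/2)^2"
      by (simp add: power2_eq_square field_simps)
    ultimately show "z^2 * (3/2 * (real m + 1)) \<le> ((real m + 1)/2)^2"
      by linarith
  qed
  also have "\<dots> = (real m + 1)/2" by simp
  finally have b: "\<bar>z\<bar> * sqrt (3/2 * (real m + 1)) \<le> (real m + 1)/2" .
  have "\<bar>z\<bar> * wh (Suc m) + (real m + 1) * wh m
      = (\<bar>z\<bar> * sqrt (3/2 * (real m + 1)) + (real m + 1)) * wh m"
    unfolding w1 by (simp add: algebra_simps)
  also have "\<dots> \<le> ((3/2) * (real m + 1)) * wh m"
    by (rule mult_right_mono) (use b wh_pos[of m] in auto)
  also have "\<dots> \<le> sqrt ((3/2)^2 * ((real m + 1) * (real m + 2))) * wh m"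
    by (rule mult_right_mono) (use a wh_pos[of m] in auto)
  finally show ?thesis unfolding w2 .
qed

lemma hermite_bound: "\<exists>K\<ge>0. \<forall>n. \<bar>hermite_prob n z\<bar> \<le> K * wh n"
proof -
  define n0 where "n0 = nat \<lceil>6 * z^2\<rceil>"
  define K where "K = (\<Sum>j\<le>n0+1. \<bar>hermite_prob j z\<bar> / wh j)"
  have nn: "\<And>x. 0 \<le> \<bar>hermite_prob x z\<bar> / wh x"
    by (metis abs_ge_zero divide_nonneg_pos wh_pos)
  have K0: "K \<ge> 0" unfolding K_def by (intro sum_nonneg) (rule nn)
  have "\<bar>hermite_prob n z\<bar> \<le> K * wh n" for n
  proof (induction n rule: less_induct)
    case (less n)
    show ?case
    proof (cases "n \<le> n0 + 1")
      case True
      have "\<bar>hermite_prob n z\<bar> / wh n \<le> K"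
        unfolding K_def by (rule member_le_sum) (simp_all only: nn atMost_iff True finite_atMost)
      then show ?thesis using wh_pos[of n] by (simp add: field_simps)
    next
      case False
      then obtain m where n: "n = Suc (Suc m)" and m: "m \<ge> n0"
      proof -
        have "n = Suc (Suc (n - 2))" "n - 2 \<ge> n0" using False by auto
        then show ?thesis using that by blast
      qed
      have hz: "6 * z^2 \<le> real m + 1"
      proof -
        have "6 * z^2 \<le> real n0" unfolding n0_def by linarith
        then show ?thesis using m by linarith
      qed
      have IH1: "\<bar>hermite_prob (Suc m) z\<bar> \<le> K * wh (Suc m)" using less n by auto
      have IH0: "\<bar>hermite_prob m z\<bar> \<le> K * wh m" using less n by auto
      have "\<bar>hermite_prob n z\<bar> \<le> \<bar>z\<bar> * \<bar>hermite_prob (Suc m) z\<bar> + (real m + 1) * \<bar>hermite_prob m z\<bar>"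
      proof -
        have "hermite_prob n z = z * hermite_prob (Suc m) z - (real m + 1) * hermite_prob m z"
          unfolding n by simp
        then have "\<bar>hermite_prob n z\<bar> \<le> \<bar>z * hermite_prob (Suc m) z\<bar> + \<bar>(real m + 1) * hermite_prob m z\<bar>"
          by simp
        then show ?thesis by (simp add: abs_mult)
      qed
      also have "\<dots> \<le> \<bar>z\<bar> * (K * wh (Suc m)) + (real m + 1) * (K * wh m)"
        by (intro add_mono mult_left_mono IH1 IH0) auto
      also have "\<dots> = K * (\<bar>z\<bar> * wh (Suc m) + (real m + 1) * wh m)" by (simp add: algebra_simps)
      also have "\<dots> \<le> K * wh n" unfolding n by (rule mult_left_mono[OF wh_step[OF hz] K0])
      finally show ?thesis .
    qed
  qed
  then show ?thesis using K0 by blast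
qed



lemma comb_ineq:
  assumes "q = a + 2*N"
  shows "2^a * fact q \<le> (4::nat)^q * fact a * (fact N)^2"
proof -
  have e1: "fact a * fact (2*N) * (q choose a) = (fact q :: nat)"
    using binomial_fact_lemma[of a q] assms by simp
  have e2: "fact N * fact N * ((2*N) choose N) = (fact (2*N) :: nat)"
    using binomial_fact_lemma[of N "2*N"] by simp
  have c1: "q choose a \<le> 2^q" by (rule binomial_le_pow2)
  have c2: "(2*N) choose N \<le> 2^(2*N)" by (rule binomial_le_pow2)
  have "(fact q :: nat) = fact a * (fact N * fact N * ((2*N) choose N)) * (q choose a)"
    using e1 e2 by simp
  also have "\<dots> \<le> fact a * (fact N * fact N * 2^(2*N)) * 2^q"
    by (intro mult_mono c1 c2 order.refl) auto
  finally have "2^a * (fact q :: nat) \<le> 2^a * (fact a * (fact N * fact N * 2^(2*N)) * 2^q)" by simp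
  also have "\<dots> = (2^(a + 2*N) * 2^q) * fact a * (fact N)^2"
    by (simp add: power_add power2_eq_square)
  also have "2^(a + 2*N) * 2^q = (4::nat)^q"
    using assms by (simp add: power_mult_distrib[symmetric])
  finally show ?thesis .
qed

lemma term_bound:
  assumes "u \<le> q"
  shows "Ew u * (wh (q-u) / fact (q-u)) \<le> sqrt (3/4) ^ (q-u) * 2^q / sqrt (fact q)"
proof (cases "even u")
  case False then show ?thesis by (simp add: Ew_def)
next
  case True
  then obtain N where u: "u = 2*N" by auto
  define a where "a = q - u"
  have q: "q = a + 2*N" using assms a_def u by simp
  have ci: "real (2^a * fact q) \<le> real ((4::nat)^q * fact a * (fact N)^2)"
    using comb_ineq[OF q] by linarith
  have ci': "2^a * fact q \<le> (4::real)^q * fact a * (fact N)^2"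
    using ci by simp
  let ?L = "Ew u * (wh a / fact a)"
  let ?R = "sqrt (3/4) ^ a * 2^q / sqrt (fact q)"
  have L2: "?L^2 = (3/2)^a / (fact a * (fact N)^2)"
    by (simp add: Ew_def u wh_def power_divide power_mult_distrib power2_eq_square field_simps)
  have R2: "?R^2 = (3/4)^a * 4^q / fact q"
  proof -
    have "?R^2 = (sqrt (3/4) ^ a)^2 * (2^q)^2 / (sqrt (fact q))^2"
      by (simp add: power_divide power_mult_distrib)
    also have "(sqrt (3/4) ^ a)^2 = (sqrt (3/4)^2)^a" by (simp only: power_even_eq[symmetric] power_mult)
    also have "((2::real)^q)^2 = (2^2::real)^q" by (simp only: power_even_eq[symmetric] power_mult)
    finally show ?thesis by simp
  qed
  have "(3/2::real)^a / (fact a * (fact N)^2) \<le> (3/4)^a * 4^q / fact q"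
  proof -
    have p: "(3/2::real)^a = (3/4)^a * 2^a"
      by (subst power_mult_distrib[symmetric]) simp
    have X: "2^a / (fact a * (fact N)^2) \<le> (4::real)^q / fact q"
      using ci' by (simp add: divide_simps)
    have "(3/2::real)^a / (fact a * (fact N)^2) = (3/4)^a * (2^a / (fact a * (fact N)^2))"
      unfolding p by simp
    also have "\<dots> \<le> (3/4)^a * (4^q / fact q)"
      by (rule mult_left_mono[OF X]) simp
    finally show ?thesis by simp
  qed
  then have "?L^2 \<le> ?R^2" using L2 R2 by simp
  then have "?L \<le> ?R" by (rule power2_le_imp_le) simp
  then show ?thesis by (simp add: a_def)
qed



theorem mainTheorem12:
  shows "\<forall>z::real. \<exists>C::real. \<forall>q::nat. q \<ge> 1 \<longrightarrow>
    \<bar>\<Sum>u=0..q. \<Sum>k=0..u. alpha_coef k (u - k) / (fact k * fact (u - k))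
        * (beta_fn (q - u) z / fact (q - u))\<bar>
    \<le> C * 2 ^ q * (1 / sqrt (fact (q - 1)))"
proof
  fix z :: real
  obtain K where K0: "K \<ge> 0" and K: "\<And>n. \<bar>hermite_prob n z\<bar> \<le> K * wh n"
    using hermite_bound[of z] by blast
  define \<phi> where "\<phi> = std_gauss_density z"
  have phi0: "\<phi> \<ge> 0" unfolding \<phi>_def std_gauss_density_def by simp
  define \<rho> where "\<rho> = sqrt (3/4::real)"
  have rho0: "0 < \<rho>" and rho1: "\<rho> < 1" unfolding \<rho>_def by (auto simp: real_sqrt_less_iff)
  define P where "P = sqrt (pi/2) * \<phi> * K"
  have P0: "P \<ge> 0" unfolding P_def using phi0 K0 by simp
  define C where "C = P / (1 - \<rho>)"
  have C0: "C \<ge> 0" unfolding C_def using P0 rho1 by simp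
  show "\<exists>C::real. \<forall>q::nat. q \<ge> 1 \<longrightarrow>
    \<bar>\<Sum>u=0..q. \<Sum>k=0..u. alpha_coef k (u - k) / (fact k * fact (u - k))
        * (beta_fn (q - u) z / fact (q - u))\<bar>
    \<le> C * 2 ^ q * (1 / sqrt (fact (q - 1)))"
  proof (intro exI allI impI)
    fix q :: nat assume q1: "q \<ge> 1"
    let ?A = "\<lambda>u. \<Sum>k=0..u. alpha_coef k (u - k) / (fact k * fact (u - k))"
    have "\<bar>\<Sum>u=0..q. \<Sum>k=0..u. alpha_coef k (u - k) / (fact k * fact (u - k))
        * (beta_fn (q - u) z / fact (q - u))\<bar>
        = \<bar>\<Sum>u=0..q. ?A u * (beta_fn (q - u) z / fact (q - u))\<bar>"
      by (simp only: sum_distrib_right)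
    also have "\<dots> \<le> (\<Sum>u=0..q. \<bar>?A u * (beta_fn (q - u) z / fact (q - u))\<bar>)"
      by (rule sum_abs)
    also have "\<dots> \<le> (\<Sum>u=0..q. P * (\<rho> ^ (q-u) * 2^q / sqrt (fact q)))"
    proof (rule sum_mono)
      fix u assume u: "u \<in> {0..q}"
      have b: "\<bar>beta_fn (q - u) z / fact (q - u)\<bar> \<le> \<phi> * K * (wh (q-u) / fact (q-u))"
      proof -
        have "\<bar>beta_fn (q - u) z / fact (q - u)\<bar> = \<phi> * \<bar>hermite_prob (q-u) z\<bar> / fact (q-u)"
          unfolding beta_fn_def \<phi>_def using phi0[unfolded \<phi>_def] by (simp add: abs_mult)
        also have "\<dots> \<le> \<phi> * (K * wh (q-u)) / fact (q-u)"
          by (intro divide_right_mono mult_left_mono K phi0) simp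
        finally show ?thesis by simp
      qed
      have "\<bar>?A u * (beta_fn (q - u) z / fact (q - u))\<bar>
          = \<bar>?A u\<bar> * \<bar>beta_fn (q - u) z / fact (q - u)\<bar>" by (rule abs_mult)
      also have "\<dots> \<le> (sqrt (pi/2) * Ew u) * (\<phi> * K * (wh (q-u) / fact (q-u)))"
        by (rule mult_mono[OF A_bound b]) (auto simp: Ew_def)
      also have "\<dots> = P * (Ew u * (wh (q-u) / fact (q-u)))"
        by (simp add: P_def mult_ac)
      also have "\<dots> \<le> P * (\<rho> ^ (q-u) * 2^q / sqrt (fact q))"
        unfolding \<rho>_def by (rule mult_left_mono[OF term_bound P0]) (use u in auto)
      finally show "\<bar>?A u * (beta_fn (q - u) z / fact (q - u))\<bar> \<le> P * (\<rho> ^ (q-u) * 2^q / sqrt (fact q))" .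
    qed
    also have "\<dots> = P * 2^q / sqrt (fact q) * (\<Sum>u=0..q. \<rho> ^ (q-u))"
      by (simp add: sum_distrib_left sum_divide_distrib mult_ac)
    also have "(\<Sum>u=0..q. \<rho> ^ (q-u)) = (\<Sum>u=0..q. \<rho> ^ u)"
      by (subst sum.atLeastAtMost_rev) (rule sum.cong, auto)
    also have "P * 2^q / sqrt (fact q) * (\<Sum>u=0..q. \<rho> ^ u) \<le> P * 2^q / sqrt (fact q) * (1 / (1 - \<rho>))"
      by (rule mult_left_mono) (use geometric_sum_less[of \<rho> "{0..q}"] rho0 rho1 P0 in auto)
    also have "\<dots> = C * 2^q * (1 / sqrt (fact q))" by (simp add: C_def)
    also have "\<dots> \<le> C * 2^q * (1 / sqrt (fact (q-1)))"
    proof (rule mult_left_mono)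
      have "(fact (q-1) :: real) \<le> fact q" by (rule fact_mono) simp
      then have "sqrt (fact (q-1)) \<le> sqrt (fact q :: real)" by simp
      then show "1 / sqrt (fact q) \<le> 1 / sqrt (fact (q - 1) :: real)"
        by (rule divide_left_mono) auto
    qed (use C0 in simp)
    finally show "\<bar>\<Sum>u=0..q. \<Sum>k=0..u. alpha_coef k (u - k) / (fact k * fact (u - k))
        * (beta_fn (q - u) z / fact (q - u))\<bar>
    \<le> C * 2 ^ q * (1 / sqrt (fact (q - 1)))" .
  qed
qed

end
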